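(* Let $c$ be a positive integer and $\zeta_c\in\mathbb{C}$ a primitive $c$-th root of unity. For $i,j\in\mathbb{Z}/c\mathbb{Z}$ let $\Theta_c^{i,j}\in\mathbb{Z}[T]$ be the minimal polynomial of $\zeta_c^i+\zeta_c^{-i}+\zeta_c^j+\zeta_c^{-j}$ and $\Delta_c^{i,j}\in\mathbb{Z}[T]$ the minimal polynomial of $\zeta_c^{i+j}+\zeta_c^{i-j}+\zeta_c^{-i+j}+\zeta_c^{-i-j}+2$, and set $\Theta_c=\mathrm{lcm}\{\Theta_c^{i,j}: i,j\in\mathbb{Z}/c\mathbb{Z}\}$, $\Delta_c=\mathrm{lcm}\{\Delta_c^{i,j}: i,j\in\mathbb{Z}/c\mathbb{Z}\}$. Then for every field $\mathbb{F}$ and every $g\in\mathrm{Sp}_4(\mathbb{F})$ of order dividing $c$, we have $\Theta_c(\chi_3(g))=0$ and $\Delta_c(\chi_2(g))=0$ in $\mathbb{F}$.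
   Context: For $M\in\mathrm{M}_4(\mathbb{F})$ write its characteristic polynomial as $T^4-\chi_3(M)T^3+\chi_2(M)T^2-\chi_1(M)T+\chi_0(M)$ (so $\chi_3(M)=\mathrm{tr}(M)$). Polynomials in $\mathbb{Z}[T]$ are evaluated in $\mathbb{F}$ via the canonical map $\mathbb{Z}\to\mathbb{F}$. *)

theory Defs
  imports Complex_Main "HOL-Computational_Algebra.Polynomial_Factorial"
    "Jordan_Normal_Form.Char_Poly"
begin

text \<open>Minimal polynomial in Z[T] of an algebraic integer x: the monic integer
polynomial of least degree vanishing at x (unique, and it is the minimal
polynomial over Q).\<close>
definition min_int_poly :: "complex \<Rightarrow> int poly" where
  "min_int_poly x = (THE p. lead_coeff p = 1 \<and> poly (map_poly of_int p) x = 0 \<and>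
      (\<forall>q :: int poly. q \<noteq> 0 \<longrightarrow> poly (map_poly of_int q) x = 0 \<longrightarrow> degree p \<le> degree q))"

definition primitive_root :: "nat \<Rightarrow> complex \<Rightarrow> bool" where
  "primitive_root c z \<longleftrightarrow> z ^ c = 1 \<and> (\<forall>k\<in>{1..<c}. z ^ k \<noteq> 1)"

definition Theta :: "nat \<Rightarrow> complex \<Rightarrow> int poly" where
  "Theta c z = Lcm ((\<lambda>(i,j). min_int_poly (z^i + inverse (z^i) + z^j + inverse (z^j)))
                    ` ({0..<c} \<times> {0..<c}))"

definition Delta :: "nat \<Rightarrow> complex \<Rightarrow> int poly" where
  "Delta c z = Lcm ((\<lambda>(i,j). min_int_poly (z^(i+j) + z^i * inverse (z^j)
                        + inverse (z^i) * z^j + inverse (z^(i+j)) + 2))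
                    ` ({0..<c} \<times> {0..<c}))"

text \<open>Standard symplectic form J = [[0, I_2], [-I_2, 0]].\<close>
definition J4 :: "'a :: comm_ring_1 mat" where
  "J4 = mat 4 4 (\<lambda>(i,j). if i < 2 \<and> j = i + 2 then 1 else if j < 2 \<and> i = j + 2 then -1 else 0)"

definition Sp4 :: "'a :: comm_ring_1 mat set" where
  "Sp4 = {g \<in> carrier_mat 4 4. transpose_mat g * J4 * g = J4}"

text \<open>char_poly M = T^4 - chi 3 M T^3 + chi 2 M T^2 - chi 1 M T + chi 0 M.\<close>
definition chi :: "nat \<Rightarrow> 'a :: comm_ring_1 mat \<Rightarrow> 'a" where
  "chi k M = (-1) ^ (4 - k) * coeff (char_poly M) k"

end

theory Submission
  imports Defs "HOL-Algebra.Algebraic_Closure_Type"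
begin

hide_const (open) Polynomials.degree Polynomials.lead_coeff up_ring.coeff



lemma poly_of_int_smult: "poly (map_poly (of_int :: int \<Rightarrow> 'b::comm_ring_1) (Polynomial.smult a p)) x = of_int a * poly (map_poly of_int p) x"
  by (simp add: of_int_hom.map_poly_hom_smult)

lemma min_int_poly_props:
  assumes P1: "lead_coeff P = 1" and Px: "poly (map_poly of_int P) (x::complex) = 0"
  shows "lead_coeff (min_int_poly x) = 1 \<and> poly (map_poly of_int (min_int_poly x)) x = 0"
proof -
  define S where "S = {q::int poly. q \<noteq> 0 \<and> poly (map_poly of_int q) x = 0}"
  have PS: "P \<in> S" using P1 Px unfolding S_def by auto
  obtain m where mS: "m \<in> S" and mmin: "\<And>q. q \<in> S \<Longrightarrow> degree m \<le> degree q"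
    using ex_has_least_nat[of "\<lambda>q. q \<in> S" P degree] PS by blast
  define m' where "m' = primitive_part m"
  have m0: "m \<noteq> 0" using mS S_def by auto
  have cm: "content m \<noteq> 0" using m0 by simp
  have "poly (map_poly of_int m) x = of_int (content m) * poly (map_poly of_int m') x"
    unfolding m'_def by (subst content_times_primitive_part[symmetric, of m], subst poly_of_int_smult, simp)
  hence m'x: "poly (map_poly of_int m') x = 0" using mS cm unfolding S_def by auto
  have m'0: "m' \<noteq> 0" using m0 m'_def by simp
  have cm': "content m' = 1" using m0 m'_def by simp
  have dm': "degree m' = degree m" using m'_def by simp
  obtain q r where qr: "pseudo_divmod P m' = (q, r)" by fastforce
  define c where "c = lead_coeff m' ^ (Suc (degree P) - degree m')"
  have eq: "Polynomial.smult c P = m' * q + r" and rdeg: "r = 0 \<or> degree r < degree m'"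
    using pseudo_divmod[OF m'0 qr] unfolding c_def by auto
  have r0: "r = 0"
  proof (rule ccontr)
    assume rn: "r \<noteq> 0"
    have "map_poly (of_int :: int \<Rightarrow> complex) r = map_poly of_int (Polynomial.smult c P) - map_poly of_int m' * map_poly of_int q"
      using eq by (simp add: of_int_poly_hom.hom_mult[symmetric] of_int_poly_hom.hom_minus[symmetric] algebra_simps)
    hence "poly (map_poly of_int r) x = 0" using Px m'x by (simp add: poly_of_int_smult)
    hence "r \<in> S" using rn S_def by auto
    from mmin[OF this] rdeg rn dm' show False by simp
  qed
  have c0: "c \<noteq> 0" unfolding c_def using m'0 by simp
  have cP: "content P = 1"
  proof -
    have "content P dvd 1" using content_dvd_coeff[of P "degree P"] P1 by simp
    thus ?thesis by (simp add: is_unit_content_iff[symmetric] del: is_unit_content_iff)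
  qed
  have "primitive_part (Polynomial.smult c P) = primitive_part (m' * q)" using eq r0 by simp
  hence "Polynomial.smult (unit_factor c) P = m' * primitive_part q"
    using primitive_part_smult[of c P] primitive_part_mult[of m' q] primitive_part_prim[OF cP]
       primitive_part_prim[OF cm'] by simp
  hence "unit_factor c = lead_coeff m' * lead_coeff (primitive_part q)"
    using P1 by (metis lead_coeff_mult lead_coeff_smult mult.right_neutral)
  hence "is_unit (lead_coeff m')" using c0
    by (metis dvd_triv_left is_unit_unit_factor dvd_unit_imp_unit unit_factor_is_unit)
  hence lu: "lead_coeff m' * lead_coeff m' = 1"
    by (metis abs_mult_self_eq mult.right_neutral zdvd1_eq)
  define p0 where "p0 = Polynomial.smult (lead_coeff m') m'"
  have p0l: "lead_coeff p0 = 1" unfolding p0_def using lu m'0 by (simp)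
  have p0x: "poly (map_poly of_int p0) x = 0" unfolding p0_def using m'x by (simp add: poly_of_int_smult)
  have lm0: "lead_coeff m' \<noteq> 0" using lu by auto
  have dp0: "degree p0 = degree m" unfolding p0_def using lm0 dm' by simp
  have p0S: "p0 \<in> S" using p0l p0x S_def by auto
  have p0min: "\<forall>q. q \<noteq> 0 \<longrightarrow> poly (map_poly of_int q) x = 0 \<longrightarrow> degree p0 \<le> degree q"
    using mmin dp0 S_def by auto
  have uniq: "p = p0" if pl: "lead_coeff p = 1" and px: "poly (map_poly of_int p) x = 0"
     and pm: "\<forall>q :: int poly. q \<noteq> 0 \<longrightarrow> poly (map_poly of_int q) x = 0 \<longrightarrow> degree p \<le> degree q" for p
  proof (rule ccontr)
    assume ne: "p \<noteq> p0"
    have pS: "p \<in> S" using pl px S_def by auto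
    have dd: "degree p = degree p0" using pm p0S mmin[OF pS] dp0 S_def by force
    have "degree (p - p0) < degree p"
    proof (rule degree_lessI)
      show "p - p0 \<noteq> 0 \<or> 0 < degree p" using ne by simp
      show "\<forall>k\<ge>degree p. coeff (p - p0) k = 0"
      proof (intro allI impI)
        fix k assume k: "degree p \<le> k"
        show "coeff (p - p0) k = 0"
        proof (cases "k = degree p")
          case True thus ?thesis using pl p0l dd by simp
        next
          case False thus ?thesis using k dd by (simp add: coeff_eq_0)
        qed
      qed
    qed
    moreover have "poly (map_poly of_int (p - p0)) x = 0"
      using px p0x by (simp add: of_int_poly_hom.hom_minus)
    moreover have "p - p0 \<noteq> 0" using ne by simp
    ultimately have "degree p \<le> degree (p - p0)" using pm by blast
    thus False using \<open>degree (p - p0) < degree p\<close> by simp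
  qed
  have "min_int_poly x = p0"
    unfolding min_int_poly_def
    apply (rule the_equality)
    subgoal using p0l p0x p0min by blast
    subgoal for p using uniq by blast
    done
  thus ?thesis using p0l p0x by simp
qed


lemma eigen_alg_int:
  fixes A :: "int mat" and w :: "complex vec"
  assumes A: "A \<in> carrier_mat n n" and w: "w \<in> carrier_vec n" "w \<noteq> 0\<^sub>v n"
    and eq: "map_mat of_int A *\<^sub>v w = x \<cdot>\<^sub>v w"
  shows "\<exists>P. lead_coeff P = 1 \<and> poly (map_poly of_int P) x = 0"
proof (intro exI conjI)
  show "lead_coeff (char_poly A) = 1" using degree_monic_char_poly[OF A] by simp
  have A': "map_mat (of_int :: int \<Rightarrow> complex) A \<in> carrier_mat n n" using A by simp
  have "eigenvector (map_mat of_int A) w x" unfolding eigenvector_def using w eq A by auto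
  hence "eigenvalue (map_mat (of_int :: int \<Rightarrow> complex) A) x" unfolding eigenvalue_def by blast
  hence "poly (char_poly (map_mat (of_int :: int \<Rightarrow> complex) A)) x = 0"
    using eigenvalue_root_char_poly[OF A'] by simp
  moreover have "char_poly (map_mat (of_int :: int \<Rightarrow> complex) A) = map_poly of_int (char_poly A)"
    by (rule of_int_hom.char_poly_hom[OF A])
  ultimately show "poly (map_poly of_int (char_poly A)) x = 0" by simp
qed

lemma pow_mod_root: assumes "(u::'b::comm_ring_1)^c = 1" shows "u^(n mod c) = u^n"
proof -
  have "u^n = u^(c*(n div c) + n mod c)" by simp
  also have "\<dots> = (u^c)^(n div c) * u^(n mod c)" by (simp only: power_add power_mult)
  finally show ?thesis using assms by simp
qed

lemma shift_alg_int:
  fixes u v :: complex and N :: nat and a b :: "nat \<Rightarrow> nat"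
  assumes c: "c > 0" and u: "u^c = 1" and v: "v^c = 1"
  shows "\<exists>P. lead_coeff P = 1 \<and> poly (map_poly of_int P) (\<Sum>s<N. u^(a s) * v^(b s)) = 0"
proof -
  define t where "t = (\<lambda>s k. ((k div c + a s) mod c) * c + (k mod c + b s) mod c)"
  define A :: "int mat" where "A = mat (c*c) (c*c) (\<lambda>(k,l). \<Sum>s<N. if l = t s k then 1 else 0)"
  define w where "w = vec (c*c) (\<lambda>k. u^(k div c) * v^(k mod c))"
  define x where "x = (\<Sum>s<N. u^(a s) * v^(b s))"
  have tlt: "t s k < c*c" for s k
  proof -
    define p where "p = (k div c + a s) mod c"
    define q where "q = (k mod c + b s) mod c"
    have "p + 1 \<le> c" using c unfolding p_def by (simp add: Suc_leI)
    hence "(p + 1) * c \<le> c * c" by (rule mult_le_mono1)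
    moreover have "q < c" using c unfolding q_def by simp
    ultimately have "p * c + q < c * c" by (simp add: algebra_simps)
    thus ?thesis unfolding t_def p_def q_def .
  qed
  have tdiv: "t s k div c = (k div c + a s) mod c" and tmod: "t s k mod c = (k mod c + b s) mod c" for s k
    unfolding t_def using c by auto
  have wt: "w $ (t s k) = u^(a s) * v^(b s) * (u^(k div c) * v^(k mod c))" for s k
  proof -
    have "w $ (t s k) = u^((k div c + a s) mod c) * v^((k mod c + b s) mod c)"
      unfolding w_def using tlt tdiv tmod by simp
    also have "\<dots> = u^(k div c + a s) * v^(k mod c + b s)" using pow_mod_root[OF u] pow_mod_root[OF v] by simp
    finally show ?thesis by (simp add: power_add algebra_simps)
  qed
  have eq: "map_mat of_int A *\<^sub>v w = x \<cdot>\<^sub>v w"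
  proof (rule eq_vecI)
    fix k assume k: "k < dim_vec (x \<cdot>\<^sub>v w)"
    hence k: "k < c*c" unfolding w_def by simp
    have "(map_mat of_int A *\<^sub>v w) $ k = (\<Sum>l<c*c. of_int (A $$ (k,l)) * w $ l)"
      unfolding A_def w_def using k by (simp add: scalar_prod_def atLeast0LessThan)
    also have "\<dots> = (\<Sum>l<c*c. \<Sum>s<N. (if l = t s k then 1 else 0) * w $ l)"
      unfolding A_def using k by (auto simp: sum_distrib_right of_int_sum intro!: sum.cong)
    also have "\<dots> = (\<Sum>s<N. \<Sum>l<c*c. (if l = t s k then 1 else 0) * w $ l)"
      by (rule sum.swap)
    also have "\<dots> = (\<Sum>s<N. \<Sum>l<c*c. if l = t s k then w $ l else 0)"
      by (intro sum.cong refl) auto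
    also have "\<dots> = (\<Sum>s<N. w $ (t s k))"
      using tlt by (simp add: sum.delta)
    also have "\<dots> = x * w $ k" unfolding x_def using k wt by (simp add: sum_distrib_right w_def)
    finally show "(map_mat of_int A *\<^sub>v w) $ k = (x \<cdot>\<^sub>v w) $ k" using k w_def by simp
  qed (simp add: A_def w_def)
  have w0: "w \<noteq> 0\<^sub>v (c*c)"
  proof
    assume "w = 0\<^sub>v (c*c)"
    hence "w $ 0 = 0" using c by simp
    thus False unfolding w_def using c by simp
  qed
  show ?thesis using eigen_alg_int[of A "c*c" w x] eq w0 unfolding x_def by (simp add: A_def w_def)
qed


definition evY :: "'k::comm_ring_1 \<Rightarrow> int poly \<Rightarrow> 'k" where "evY y r = poly (map_poly of_int r) y"
definition ev2 :: "'k::comm_ring_1 \<Rightarrow> 'k \<Rightarrow> int poly poly \<Rightarrow> 'k" where "ev2 y w P = poly (map_poly (evY y) P) w"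

lemma evY_hom: "comm_ring_hom (evY y)"
  unfolding evY_def by unfold_locales (simp_all add: of_int_poly_hom.hom_add of_int_poly_hom.hom_mult)

lemma evY_0[simp]: "evY y 0 = 0" by (simp add: evY_def)

lemma ev2_mult[simp]: "ev2 y w (P*Q) = ev2 y w P * ev2 y w Q"
proof -
  interpret comm_ring_hom "evY y" by (rule evY_hom)
  interpret M: map_poly_comm_ring_hom "evY y" ..
  show ?thesis unfolding ev2_def by (simp add: M.hom_mult)
qed
lemma ev2_add[simp]: "ev2 y w (P+Q) = ev2 y w P + ev2 y w Q"
proof -
  interpret comm_ring_hom "evY y" by (rule evY_hom)
  interpret M: map_poly_comm_ring_hom "evY y" ..
  show ?thesis unfolding ev2_def by (simp add: M.hom_add)
qed
lemma ev2_diff[simp]: "ev2 y w (P-Q) = ev2 y w P - ev2 y w Q"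
proof -
  interpret comm_ring_hom "evY y" by (rule evY_hom)
  interpret M: map_poly_comm_ring_hom "evY y" ..
  show ?thesis unfolding ev2_def by (simp add: M.hom_minus)
qed
lemma ev2_one[simp]: "ev2 y w 1 = 1"
proof -
  interpret comm_ring_hom "evY y" by (rule evY_hom)
  interpret M: map_poly_comm_ring_hom "evY y" ..
  show ?thesis unfolding ev2_def by (simp)
qed
lemma ev2_zero[simp]: "ev2 y w 0 = 0" by (simp add: ev2_def)
lemma ev2_power[simp]: "ev2 y w (P^n) = ev2 y w P ^ n"
  by (induction n) simp_all
lemma ev2_sum: "ev2 y w (\<Sum>k\<in>A. f k) = (\<Sum>k\<in>A. ev2 y w (f k))"
  by (induction A rule: infinite_finite_induct) simp_all
lemma evY_pCons[simp]: "evY y (pCons a p) = of_int a + y * evY y p"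
  by (cases "a = 0 \<and> p = 0") (auto simp: evY_def map_poly_pCons)
lemma evY_1[simp]: "evY y 1 = 1" by (simp add: evY_def)
lemma ev2_pCons[simp]: "ev2 y w (pCons a P) = evY y a + w * ev2 y w P"
  by (cases "a = 0 \<and> P = 0") (auto simp: ev2_def map_poly_pCons)
lemma ev2_smult[simp]: "ev2 y w (Polynomial.smult a P) = evY y a * ev2 y w P"
proof -
  interpret comm_ring_hom "evY y" by (rule evY_hom)
  interpret M: map_poly_comm_ring_hom "evY y" ..
  have "Polynomial.smult a P = [:a:] * P" by simp
  thus ?thesis by (simp only: ev2_mult) simp
qed
lemma ev2_Y[simp]: "ev2 y w [:[:0,1:]:] = y"
  by simp
lemma ev2_W[simp]: "ev2 y w [:0,1:] = w"
  by simp
lemma ev2_monom[simp]: "ev2 y w (Polynomial.monom 1 n) = w ^ n"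
  by (simp add: ev2_def map_poly_monom Polynomial.poly_monom)

lemma poly_sum_bound: fixes p :: "'a::comm_semiring_1 poly" assumes "degree p \<le> n" shows "poly p x = (\<Sum>i\<le>n. coeff p i * x ^ i)"
proof -
  have "poly p x = poly (\<Sum>i\<le>n. Polynomial.monom (coeff p i) i) x" using poly_as_sum_of_monoms'[OF assms] by simp
  also have "\<dots> = (\<Sum>i\<le>n. coeff p i * x ^ i)" by (simp add: poly_sum Polynomial.poly_monom)
  finally show ?thesis .
qed

lemma card_roots_c: assumes "inj_on (\<lambda>i. (z::complex)^i) {..<c}"
  shows "card ((\<lambda>i. z^i) ` {..<c}) = c"
  using card_image[OF assms] by simp

lemma monicD: assumes c: "c > 0"
  shows "degree (Polynomial.monom (1::'a::comm_ring_1) c - 1) = c" "coeff (Polynomial.monom (1::'a) c - 1) c = 1"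
    "Polynomial.monom (1::'a) c - 1 \<noteq> 0"
proof -
  have eq: "Polynomial.monom (1::'a) c - 1 = Polynomial.monom 1 c + [:-1:]" by (simp add: one_pCons)
  have "degree (Polynomial.monom (1::'a) c + [:-1:]) = c"
    using c by (subst degree_add_eq_left) (simp_all add: degree_monom_eq)
  thus d: "degree (Polynomial.monom (1::'a) c - 1) = c" by (simp only: eq)
  show co: "coeff (Polynomial.monom (1::'a) c - 1) c = 1" using c by simp
  show "Polynomial.monom (1::'a) c - 1 \<noteq> 0" using c by (auto simp: monom_eq_1_iff)
qed

lemma transfer1:
  fixes z :: complex and f :: "int poly" and l :: "'k::field"
  assumes c: "c > 0" and zc: "z^c = 1" and zd: "inj_on (\<lambda>i. z^i) {..<c}"
    and hC: "\<And>i. i < c \<Longrightarrow> poly (map_poly of_int f) (z^i) = 0"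
    and l: "l^c = 1"
  shows "poly (map_poly of_int f) l = 0"
proof -
  define D :: "int poly" where "D = Polynomial.monom 1 c - 1"
  have dD: "degree D = c" and lD: "coeff D c = 1" and D0: "D \<noteq> 0"
    unfolding D_def using monicD[OF c] by auto
  obtain q r where qr: "pseudo_divmod f D = (q, r)" by fastforce
  have eq: "f = D * q + r" and rd: "r = 0 \<or> degree r < c"
    using pseudo_divmod[OF D0 qr] dD lD by auto
  have evD: "poly (map_poly of_int D) x = x^c - 1" for x :: complex
    unfolding D_def by (simp add: of_int_poly_hom.hom_minus Polynomial.poly_monom)
  have evD': "poly (map_poly of_int D) x = x^c - 1" for x :: 'k
    unfolding D_def by (simp add: of_int_poly_hom.hom_minus Polynomial.poly_monom)
  have r0: "map_poly (of_int :: int \<Rightarrow> complex) r = 0"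
  proof (rule poly_eqI_degree[of "(\<lambda>i. z^i) ` {..<c}"])
    fix x assume "x \<in> (\<lambda>i. z^i) ` {..<c}"
    then obtain i where i: "i < c" and x: "x = z^i" by auto
    have "x^c = (z^c)^i" unfolding x by (simp add: power_mult[symmetric] mult.commute)
    hence "x^c = 1" using zc by simp
    hence "poly (map_poly of_int D) x = 0" using evD by simp
    moreover have "poly (map_poly of_int f) x = 0" using hC i x by simp
    ultimately show "poly (map_poly of_int r) x = poly 0 x" using eq
      by (simp add: of_int_poly_hom.hom_add of_int_poly_hom.hom_mult)
  next
    show "degree (map_poly (of_int :: int \<Rightarrow> complex) r) < card ((\<lambda>i. z^i) ` {..<c})"
      using card_roots_c[OF zd] rd c by auto
    show "degree (0::complex poly) < card ((\<lambda>i. z^i) ` {..<c})"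
      using card_roots_c[OF zd] c by simp
  qed
  hence "r = 0" by simp
  hence "poly (map_poly of_int f) l = poly (map_poly of_int D) l * poly (map_poly of_int q) l"
    using eq by (simp add: of_int_poly_hom.hom_mult)
  thus ?thesis using evD' l by simp
qed

lemma ev_coeff: "coeff (map_poly (evY y) P) k = evY y (coeff P k)"
  by (simp add: coeff_map_poly)

lemma evR_gen:
  fixes y w :: "'b::field" and L :: "int poly poly" and Q :: "int poly"
  assumes y: "y \<noteq> 0" and w: "w \<noteq> 0"
  defines "d \<equiv> degree Q" and "M \<equiv> [:[:0,1:]:] * [:0,1:]"
  defines "R \<equiv> (\<Sum>k\<le>d. [:[:coeff Q k:]:] * L^k * M^(d-k))"
  shows "ev2 y w R = (y*w)^d * poly (map_poly of_int Q) (ev2 y w L / (y*w))"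
  proof -
    have "ev2 y w R = (\<Sum>k\<le>d. of_int (coeff Q k) * ev2 y w L ^ k * (y*w)^(d-k))"
      unfolding R_def M_def by (simp add: ev2_sum mult_ac)
    also have "\<dots> = (\<Sum>k\<le>d. (y*w)^d * (of_int (coeff Q k) * (ev2 y w L / (y*w)) ^ k))"
    proof (rule sum.cong[OF refl])
      fix k assume "k \<in> {..d}"
      hence k: "k \<le> d" by simp
      have "(y*w)^d = (y*w)^k * (y*w)^(d-k)" using k by (simp add: power_add[symmetric])
      thus "of_int (coeff Q k) * ev2 y w L ^ k * (y*w)^(d-k) = (y*w)^d * (of_int (coeff Q k) * (ev2 y w L / (y*w)) ^ k)"
        using y w by (simp add: power_divide field_simps)
    qed
    also have "\<dots> = (y*w)^d * poly (map_poly of_int Q) (ev2 y w L / (y*w))"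
      by (subst poly_sum_bound[of _ d]) (simp_all add: sum_distrib_left d_def degree_map_poly_le)
    finally show ?thesis .
  qed

lemma transfer2:
  fixes z :: complex and L :: "int poly poly" and Q :: "int poly" and l m :: "'k::field"
  assumes c: "c > 0" and zc: "z^c = 1" and zd: "inj_on (\<lambda>i. z^i) {..<c}"
    and hC: "\<And>i j. i < c \<Longrightarrow> j < c \<Longrightarrow> poly (map_poly of_int Q) (ev2 (z^i) (z^j) L / (z^i * z^j)) = 0"
    and l: "l^c = 1" and m: "m^c = 1"
  shows "poly (map_poly of_int Q) (ev2 l m L / (l * m)) = 0"
proof -
  define d where "d = degree Q"
  define M :: "int poly poly" where "M = [:[:0,1:]:] * [:0,1:]"
  define R where "R = (\<Sum>k\<le>d. [:[:coeff Q k:]:] * L^k * M^(d-k))"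
  have evR: "ev2 y w R = (y*w)^d * poly (map_poly of_int Q) (ev2 y w L / (y*w))"
    if "y \<noteq> 0" "w \<noteq> 0" for y w :: complex
    using evR_gen[OF that] unfolding R_def M_def d_def .
  have evR': "ev2 y w R = (y*w)^d * poly (map_poly of_int Q) (ev2 y w L / (y*w))"
    if "y \<noteq> 0" "w \<noteq> 0" for y w :: 'k
    using evR_gen[OF that] unfolding R_def M_def d_def .
  define D :: "int poly poly" where "D = Polynomial.monom 1 c - 1"
  have dD: "degree D = c" and lD: "coeff D c = 1" and D0: "D \<noteq> 0"
    unfolding D_def using monicD[OF c] by auto
  obtain q \<rho> where qr: "pseudo_divmod R D = (q, \<rho>)" by fastforce
  have eq: "R = D * q + \<rho>" and rd: "\<rho> = 0 \<or> degree \<rho> < c"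
    using pseudo_divmod[OF D0 qr] dD lD by auto
  have evD: "ev2 y w D = w^c - 1" for y w :: complex
    unfolding D_def by simp
  have evD': "ev2 y w D = w^c - 1" for y w :: 'k
    unfolding D_def by simp
  have zne: "z \<noteq> 0" using zc c by (metis power_0_left zero_neq_one neq0_conv)
  have zpc: "(z^i)^c = 1" for i
  proof -
    have "(z^i)^c = (z^c)^i" by (simp add: power_mult[symmetric] mult.commute)
    thus ?thesis using zc by simp
  qed
  have coeffC: "evY (z^i) (coeff \<rho> k) = 0" if i: "i < c" for i k
  proof -
    have "map_poly (evY (z^i)) \<rho> = 0"
    proof (rule poly_eqI_degree[of "(\<lambda>j. z^j) ` {..<c}"])
      fix x assume "x \<in> (\<lambda>j. z^j) ` {..<c}"
      then obtain j where j: "j < c" and x: "x = z^j" by auto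
      have "ev2 (z^i) x R = 0" using evR[of "z^i" x] hC[OF i j] x zne by simp
      moreover have "ev2 (z^i) x D = 0" using evD x zpc by simp
      ultimately have "ev2 (z^i) x \<rho> = 0" using eq by simp
      thus "poly (map_poly (evY (z^i)) \<rho>) x = poly 0 x" unfolding ev2_def by simp
    next
      show "degree (map_poly (evY (z^i)) \<rho>) < card ((\<lambda>j. z^j) ` {..<c})"
        using card_roots_c[OF zd] rd c degree_map_poly_le[of "evY (z^i)" \<rho>] by auto
      show "degree (0::complex poly) < card ((\<lambda>j. z^j) ` {..<c})"
        using card_roots_c[OF zd] c by simp
    qed
    hence "coeff (map_poly (evY (z^i)) \<rho>) k = 0" by simp
    thus ?thesis by (simp add: ev_coeff)
  qed
  have "evY l (coeff \<rho> k) = 0" for k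
    using transfer1[OF c zc zd _ l, of "coeff \<rho> k"] coeffC unfolding evY_def by blast
  hence "map_poly (evY l) \<rho> = 0" by (intro poly_eqI) (simp add: ev_coeff)
  hence "ev2 l m \<rho> = 0" unfolding ev2_def by simp
  hence "ev2 l m R = 0" using eq evD'[of l m] m by simp
  moreover have "l \<noteq> 0" "m \<noteq> 0" using l m c by (metis power_0_left zero_neq_one neq0_conv)+
  ultimately show ?thesis using evR'[of l m] by simp
qed


definition D4 :: "(nat \<Rightarrow> nat \<Rightarrow> 'a::comm_ring_1) \<Rightarrow> 'a" where
 "D4 A = A 0 0 * (A 1 1 * (A 2 2*A 3 3 - A 2 3*A 3 2) - A 1 2 * (A 2 1*A 3 3 - A 2 3*A 3 1) + A 1 3 * (A 2 1*A 3 2 - A 2 2*A 3 1))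
 - A 0 1 * (A 1 0 * (A 2 2*A 3 3 - A 2 3*A 3 2) - A 1 2 * (A 2 0*A 3 3 - A 2 3*A 3 0) + A 1 3 * (A 2 0*A 3 2 - A 2 2*A 3 0))
 + A 0 2 * (A 1 0 * (A 2 1*A 3 3 - A 2 3*A 3 1) - A 1 1 * (A 2 0*A 3 3 - A 2 3*A 3 0) + A 1 3 * (A 2 0*A 3 1 - A 2 1*A 3 0))
 - A 0 3 * (A 1 0 * (A 2 1*A 3 2 - A 2 2*A 3 1) - A 1 1 * (A 2 0*A 3 2 - A 2 2*A 3 0) + A 1 2 * (A 2 0*A 3 1 - A 2 1*A 3 0))"

lemma det_Suc: assumes "(A :: 'a :: comm_ring_1 mat) \<in> carrier_mat (Suc n) (Suc n)"
  shows "det A = (\<Sum>j<Suc n. A $$ (0,j) * ((-1)^j * det (mat_delete A 0 j)))"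
  using laplace_expansion_row[OF assms, of 0] by (simp add: cofactor_def)

lemma det1: "(A :: 'a :: comm_ring_1 mat) \<in> carrier_mat 1 1 \<Longrightarrow> det A = A $$ (0,0)"
  by (subst det_Suc[of A 0], auto simp: mat_delete_def)
lemma det2: assumes "(A :: 'a :: comm_ring_1 mat) \<in> carrier_mat 2 2" shows "det A = A $$ (0,0) * A$$(1,1) - A$$(0,1)*A$$(1,0)"
proof -
  have A: "A \<in> carrier_mat (Suc 1) (Suc 1)" using assms by (simp add: numeral_2_eq_2)
  show ?thesis
  apply (subst det_Suc[OF A])
  apply (simp add: lessThan_Suc)
  apply (subst det1, use A in \<open>simp add: mat_delete_def\<close>)+
  using A by (simp add: mat_delete_def)
qed
lemma det3: assumes "(A :: 'a :: comm_ring_1 mat) \<in> carrier_mat 3 3" shows "det A = 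
   A $$ (0,0) * (A$$(1,1) * A$$(2,2) - A$$(1,2)*A$$(2,1))
 - A $$ (0,1) * (A$$(1,0) * A$$(2,2) - A$$(1,2)*A$$(2,0))
 + A $$ (0,2) * (A$$(1,0) * A$$(2,1) - A$$(1,1)*A$$(2,0))"
proof -
  have A: "A \<in> carrier_mat (Suc 2) (Suc 2)" using assms by simp
  show ?thesis
  apply (subst det_Suc[OF A])
  apply (simp add: lessThan_Suc)
  apply (subst det2, use A in \<open>simp add: mat_delete_def\<close>)+
  using A by (simp add: mat_delete_def numeral_eq_Suc algebra_simps)
qed
lemma det4: assumes "(A :: 'a :: comm_ring_1 mat) \<in> carrier_mat 4 4" shows "det A = D4 (\<lambda>i j. A $$ (i,j))"
proof -
  have A: "A \<in> carrier_mat (Suc 3) (Suc 3)" using assms by simp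
  show ?thesis unfolding D4_def
  apply (subst det_Suc[OF A])
  apply (simp add: lessThan_Suc)
  apply (subst det3, use A in \<open>simp add: mat_delete_def\<close>)+
  using A by (simp add: mat_delete_def numeral_eq_Suc algebra_simps)
qed

lemma D4_cong: assumes "\<And>i j. i < 4 \<Longrightarrow> j < 4 \<Longrightarrow> f i j = f' i j" shows "D4 f = D4 f'"
  unfolding D4_def by (simp add: assms)

lemma D4_scale: "D4 (\<lambda>i j. c * f i j) = c^4 * D4 f"
  unfolding D4_def by (simp add: algebra_simps eval_nat_numeral)

definition sg :: "nat \<Rightarrow> nat" where "sg i = (if i = 0 then 2 else if i = 1 then 3 else if i = 2 then 0 else 1)"
definition ep :: "nat \<Rightarrow> 'a::comm_ring_1" where "ep i = (if i < 2 then 1 else -1)"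
definition Jv :: "nat \<Rightarrow> nat \<Rightarrow> 'a::comm_ring_1" where
  "Jv i j = (if i < 2 \<and> j = i + 2 then 1 else if j < 2 \<and> i = j + 2 then -1 else 0)"
definition Msym :: "(nat \<Rightarrow> nat \<Rightarrow> 'a::comm_ring_1) \<Rightarrow> nat \<Rightarrow> nat \<Rightarrow> 'a" where
  "Msym G k l = G 0 k * G 2 l + G 1 k * G 3 l - G 2 k * G 0 l - G 3 k * G 1 l"

lemma less4: "(i::nat) < 4 \<Longrightarrow> i = 0 \<or> i = 1 \<or> i = 2 \<or> i = 3" by arith

lemma sum4: "(\<Sum>k<(4::nat). f k) = f 0 + f 1 + f 2 + (f 3 :: 'a::comm_monoid_add)"
  by (simp add: eval_nat_numeral lessThan_Suc add_ac)

lemma mult4: assumes "A \<in> carrier_mat n 4" "B \<in> carrier_mat 4 m" "i < n" "j < m"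
  shows "(A * B) $$ (i,j) = (\<Sum>k<4. A $$ (i,k) * B $$ (k,j))"
  using assms by (simp add: scalar_prod_def atLeast0LessThan)

lemma J4_carrier[simp]: "J4 \<in> carrier_mat 4 4" by (simp add: J4_def)
lemma J4_idx: "i < 4 \<Longrightarrow> j < 4 \<Longrightarrow> J4 $$ (i,j) = Jv i j"
  by (simp add: J4_def Jv_def)

lemma Sp4_Msym: assumes "g \<in> Sp4" "k < 4" "l < 4"
  shows "Msym (\<lambda>i j. g $$ (i,j)) k l = Jv k l"
proof -
  have g: "g \<in> carrier_mat 4 4" and eq: "transpose_mat g * J4 * g = J4" using assms(1) Sp4_def by auto
  have gt: "transpose_mat g \<in> carrier_mat 4 4" using g by simp
  have "(transpose_mat g * J4 * g) $$ (k,l) = (\<Sum>s<4. (transpose_mat g * J4) $$ (k,s) * g $$ (s,l))"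
    by (rule mult4) (use g assms in auto)
  also have "\<dots> = (\<Sum>s<4. (\<Sum>r<4. g $$ (r,k) * Jv r s) * g $$ (s,l))"
  proof (rule sum.cong[OF refl])
    fix s assume "s \<in> {..<4::nat}"
    hence s: "s < 4" by simp
    have "(transpose_mat g * J4) $$ (k,s) = (\<Sum>r<4. transpose_mat g $$ (k,r) * J4 $$ (r,s))"
      by (rule mult4) (use gt s assms in auto)
    also have "\<dots> = (\<Sum>r<4. g $$ (r,k) * Jv r s)"
      using g s assms by (intro sum.cong refl) (auto simp: J4_idx)
    finally show "(transpose_mat g * J4) $$ (k,s) * g $$ (s,l) = (\<Sum>r<4. g $$ (r,k) * Jv r s) * g $$ (s,l)" by simp
  qed
  also have "\<dots> = Msym (\<lambda>i j. g $$ (i,j)) k l"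
    unfolding sum4 Msym_def Jv_def by (simp add: algebra_simps)
  finally have "J4 $$ (k,l) = Msym (\<lambda>i j. g $$ (i,j)) k l" using eq by simp
  thus ?thesis using J4_idx[OF assms(2,3)] by metis
qed

lemma pf_identity: fixes a :: "nat \<Rightarrow> nat \<Rightarrow> 'a::comm_ring_1"
  shows "Msym a 0 1 * Msym a 2 3 - Msym a 0 2 * Msym a 1 3 + Msym a 0 3 * Msym a 1 2 = - D4 a"
  unfolding Msym_def D4_def by (simp add: algebra_simps)

lemma symp_det: assumes S: "\<And>k l. k < 4 \<Longrightarrow> l < 4 \<Longrightarrow> Msym G k l = Jv k l"
  shows "D4 G = (1::'a::comm_ring_1)"
proof -
  have "- D4 G = Jv 0 1 * Jv 2 3 - Jv 0 2 * Jv 1 3 + Jv 0 3 * Jv 1 2"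
    using pf_identity[of G] S by simp
  also have "\<dots> = (-1::'a)" by (simp add: Jv_def)
  finally show ?thesis by (metis minus_equation_iff)
qed

lemma key_sum: "(\<Sum>k<4. ep k * G (sg k) a * G k b) = - Msym G a (b::nat)"
  unfolding sum4 ep_def sg_def Msym_def by (simp add: algebra_simps)

lemma charpoly_D4: assumes g: "(g :: 'a::field mat) \<in> carrier_mat 4 4"
  shows "poly (char_poly g) T = D4 (\<lambda>i j. (if i = j then T else 0) - g $$ (i,j))"
proof -
  have "poly (char_poly g) T = det (- char_matrix g T)" by (rule char_poly_matrix[OF g])
  also have "\<dots> = D4 (\<lambda>i j. (- char_matrix g T) $$ (i,j))" by (rule det4) (use g in \<open>simp add: char_matrix_def\<close>)
  also have "\<dots> = D4 (\<lambda>i j. (if i = j then T else 0) - g $$ (i,j))"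
    by (rule D4_cong) (use g in \<open>auto simp: char_matrix_def\<close>)
  finally show ?thesis .
qed

lemma symp_palin:
  fixes G :: "nat \<Rightarrow> nat \<Rightarrow> 'a::field"
  assumes S: "\<And>k l. k < 4 \<Longrightarrow> l < 4 \<Longrightarrow> Msym G k l = Jv k l" and T: "T \<noteq> 0"
  shows "D4 (\<lambda>i j. (if i = j then T else 0) - G i j) = T^4 * D4 (\<lambda>i j. (if i = j then 1/T else 0) - G i j)"
proof -
  define Xf where "Xf = (\<lambda>i j. ep i * ep j * G (sg j) (sg i))"
  have Xg: "(\<Sum>k<4. Xf i k * G k j) = (if i = j then 1 else 0)" if i: "i < 4" and j: "j < 4" for i j
  proof -
    have "(\<Sum>k<4. Xf i k * G k j) = ep i * (\<Sum>k<4. ep k * G (sg k) (sg i) * G k j)"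
      unfolding Xf_def by (simp add: sum_distrib_left algebra_simps)
    also have "\<dots> = - ep i * Jv (sg i) j" unfolding key_sum
      using S[of "sg i" j] j by (simp add: sg_def)
    also have "\<dots> = (if i = j then 1 else 0)"
      using less4[OF i] less4[OF j] by (auto simp: ep_def sg_def Jv_def)
    finally show ?thesis .
  qed
  define Xm where "Xm = mat 4 4 (\<lambda>(i,j). Xf i j)"
  define Am where "Am = mat 4 4 (\<lambda>(i,j). (if i = j then T else 0) - G i j)"
  have Xm: "Xm \<in> carrier_mat 4 4" and Am: "Am \<in> carrier_mat 4 4" unfolding Xm_def Am_def by auto
  have "det Xm = D4 Xf" unfolding det4[OF Xm] by (rule D4_cong) (simp add: Xm_def)
  also have "\<dots> = D4 G" unfolding Xf_def D4_def ep_def sg_def by (simp add: algebra_simps)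
  also have "\<dots> = 1" by (rule symp_det[OF S])
  finally have dX: "det Xm = 1" .
  have dA: "det Am = D4 (\<lambda>i j. (if i = j then T else 0) - G i j)"
    unfolding det4[OF Am] by (rule D4_cong) (simp add: Am_def)
  have "det (Xm * Am) = D4 (\<lambda>i j. (Xm * Am) $$ (i,j))" by (rule det4) (use Xm Am in simp)
  also have "\<dots> = D4 (\<lambda>i j. T * Xf i j - (if i = j then 1 else 0))"
  proof (rule D4_cong)
    fix i j :: nat assume i: "i < 4" and j: "j < 4"
    have "(Xm * Am) $$ (i,j) = (\<Sum>k<4. Xm $$ (i,k) * Am $$ (k,j))" by (rule mult4[OF Xm Am i j])
    also have "\<dots> = (\<Sum>k<4. Xf i k * ((if k = j then T else 0) - G k j))"
      by (intro sum.cong refl) (simp add: Xm_def Am_def i j)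
    also have "\<dots> = (\<Sum>k<4. (if k = j then Xf i k * T else 0) - Xf i k * G k j)"
      by (intro sum.cong refl) (simp add: right_diff_distrib)
    also have "\<dots> = (\<Sum>k<4. (if k = j then Xf i k * T else 0)) - (\<Sum>k<4. Xf i k * G k j)"
      by (rule sum_subtractf)
    also have "\<dots> = T * Xf i j - (if i = j then 1 else 0)"
      using Xg[OF i j] j by (simp add: sum.delta mult.commute)
    finally show "(Xm * Am) $$ (i,j) = T * Xf i j - (if i = j then 1 else 0)" .
  qed
  also have "\<dots> = D4 (\<lambda>i j. (if i = j then 1 else 0) - T * G i j)"
    unfolding Xf_def D4_def sg_def ep_def by (simp add: algebra_simps)
  also have "\<dots> = D4 (\<lambda>i j. T * ((if i = j then 1/T else 0) - G i j))"
    using T by (intro D4_cong) (simp add: algebra_simps)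
  also have "\<dots> = T^4 * D4 (\<lambda>i j. (if i = j then 1/T else 0) - G i j)" by (rule D4_scale)
  finally show ?thesis using det_mult[OF Xm Am] dX dA by simp
qed



lemma alg_closed_infinite: "infinite (UNIV :: 'a::alg_closed_field set)"
proof
  assume fin: "finite (UNIV :: 'a set)"
  define P :: "'a poly" where "P = (\<Prod>a\<in>UNIV. [:-a,1:])"
  have dP: "degree P = card (UNIV :: 'a set)"
    unfolding P_def by (subst degree_prod_eq_sum_degree) auto
  have "card (UNIV :: 'a set) > 0" using fin by (simp add: card_gt_0_iff)
  hence d: "degree ([:1:] + P) > 0" using dP by (subst degree_add_eq_right) auto
  obtain x where "poly ([:1:] + P) x = 0" using alg_closed_imp_poly_has_root[OF d] by blast
  moreover have "poly P x = 0" unfolding P_def poly_prod using fin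
    by (intro prod_zero) auto
  ultimately show False by simp
qed

lemma poly4: fixes p :: "'a::comm_ring_1 poly" assumes "degree p \<le> 4"
  shows "poly p x = coeff p 0 + coeff p 1 * x + coeff p 2 * x^2 + coeff p 3 * x^3 + coeff p 4 * x^4"
proof -
  have "poly p x = (\<Sum>i\<le>4. coeff p i * x ^ i)"
  proof -
    have "poly p x = poly (\<Sum>i\<le>4. Polynomial.monom (coeff p i) i) x" using poly_as_sum_of_monoms'[OF assms] by simp
    also have "\<dots> = (\<Sum>i\<le>4. coeff p i * x ^ i)" by (simp add: poly_sum Polynomial.poly_monom)
    finally show ?thesis .
  qed
  also have "\<dots> = coeff p 0 + coeff p 1 * x + coeff p 2 * x^2 + coeff p 3 * x^3 + coeff p 4 * x^4"
    by (simp add: eval_nat_numeral atMost_Suc add_ac)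
  finally show ?thesis .
qed

lemma palin_coeffs:
  fixes p :: "'k::alg_closed_field poly"
  assumes d: "degree p = 4" and l: "coeff p 4 = 1"
    and pal: "\<And>T. T \<noteq> 0 \<Longrightarrow> poly p T = T^4 * poly p (1/T)"
  shows "coeff p 0 = 1 \<and> coeff p 1 = coeff p 3"
proof -
  define q where "q = [:coeff p 4, coeff p 3, coeff p 2, coeff p 1, coeff p 0:]"
  have dq: "degree q \<le> 4" unfolding q_def by (simp add: eval_nat_numeral)
  have eq: "poly p T = poly q T" if T: "T \<noteq> 0" for T
  proof -
    have "poly p T = T^4 * poly p (1/T)" using pal[OF T] .
    also have "\<dots> = poly q T" unfolding poly4[of p, OF order.eq_iff[THEN iffD1, OF d, THEN conjunct1]] q_def
      using T by (simp add: field_simps eval_nat_numeral)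
    finally show ?thesis .
  qed
  have "infinite (UNIV - {0::'k})" using alg_closed_infinite by (simp add: Diff_infinite_finite)
  then obtain A where A: "finite A" "card A = 5" "A \<subseteq> UNIV - {0::'k}"
    using infinite_arbitrarily_large by blast
  have "p = q"
  proof (rule poly_eqI_degree[of A])
    show "\<And>x. x \<in> A \<Longrightarrow> poly p x = poly q x" using A eq by auto
    show "degree p < card A" using d A by simp
    show "degree q < card A" using dq A by simp
  qed
  hence "coeff p 0 = coeff q 0" "coeff p 1 = coeff q 1" by simp_all
  thus ?thesis using l unfolding q_def by simp
qed

lemma roots_exist:
  fixes p :: "'k::alg_closed_field poly"
  assumes d: "degree p = 4" and l4: "coeff p 4 = 1" and c0: "coeff p 0 = 1" and c13: "coeff p 1 = coeff p 3"
  shows "\<exists>l m. l \<noteq> 0 \<and> m \<noteq> 0 \<and> poly p l = 0 \<and> poly p m = 0 \<and>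
      - coeff p 3 = l + 1/l + m + 1/m \<and> coeff p 2 = 2 + (l + 1/l) * (m + 1/m)"
proof -
  define a where "a = - coeff p 3"
  define b where "b = coeff p 2"
  have pe: "poly p x = 1 - a * x + b * x^2 - a * x^3 + x^4" for x
    using poly4[of p x] d l4 c0 c13 unfolding a_def b_def by simp
  obtain u1 where u1: "poly [:b - 2, -a, 1:] u1 = 0"
    using alg_closed_imp_poly_has_root[of "[:b - 2, -a, 1:]"] by auto
  define u2 where "u2 = a - u1"
  have u12: "u1 * u2 = b - 2" using u1 unfolding u2_def by (simp add: algebra_simps power2_eq_square)
  have au: "a = u1 + u2" unfolding u2_def by simp
  have quad: "\<exists>x. x \<noteq> 0 \<and> x + 1/x = u" for u :: 'k
  proof -
    obtain x where x: "poly [:1, -u, 1:] x = 0"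
      using alg_closed_imp_poly_has_root[of "[:1, -u, 1:]"] by auto
    have x0: "x \<noteq> 0" using x by auto
    have "x * x + 1 = u * x" using x by (simp add: algebra_simps)
    hence "x + 1/x = u" using x0 by (simp add: field_simps)
    thus ?thesis using x0 by blast
  qed
  obtain lam where lam: "lam \<noteq> 0" "lam + 1/lam = u1" using quad by blast
  obtain mu where mu: "mu \<noteq> 0" "mu + 1/mu = u2" using quad by blast
  have fac: "poly p x = (x^2 - u1 * x + 1) * (x^2 - u2 * x + 1)" for x
  proof -
    have b_eq: "b = u1 * u2 + 2" using u12 by simp
    show ?thesis unfolding pe au b_eq by (simp add: algebra_simps power2_eq_square eval_nat_numeral)
  qed
  have "lam^2 - u1 * lam + 1 = 0" using lam by (simp add: field_simps power2_eq_square)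
  hence pl: "poly p lam = 0" using fac by simp
  have "mu^2 - u2 * mu + 1 = 0" using mu by (simp add: field_simps power2_eq_square)
  hence pm: "poly p mu = 0" using fac by simp
  show ?thesis
    apply (rule exI[of _ lam], rule exI[of _ mu])
    using lam mu pl pm au u12 unfolding a_def[symmetric] b_def[symmetric] by simp
qed

interpretation to_ac_hom: inj_comm_ring_hom "to_ac :: 'a::field \<Rightarrow> 'a alg_closure"
  by unfold_locales (simp_all add: inj_to_ac)

lemma to_ac_poly_of_int: "to_ac (poly (map_poly of_int Q) (a::'a::field)) = poly (map_poly of_int Q) (to_ac a)"
  by (induction Q) (simp_all add: of_int_poly_hom.map_poly_pCons_hom)

lemma eig_root_unity:
  fixes A :: "'k::field mat"
  assumes A: "A \<in> carrier_mat n n" and pw: "A ^\<^sub>m c = 1\<^sub>m n" and r: "poly (char_poly A) l = 0"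
  shows "l ^ c = 1"
proof -
  have "eigenvalue A l" using eigenvalue_root_char_poly[OF A] r by simp
  then obtain v where ev: "eigenvector A v l" unfolding eigenvalue_def by blast
  have v: "v \<in> carrier_vec n" "v \<noteq> 0\<^sub>v n" using ev A unfolding eigenvector_def by auto
  have "A ^\<^sub>m c *\<^sub>v v = l^c \<cdot>\<^sub>v v" by (rule eigenvector_pow[OF A ev])
  hence eq: "v = l^c \<cdot>\<^sub>v v" using pw v by simp
  obtain i where i: "i < n" "v $ i \<noteq> 0" using v by (metis eq_vecI carrier_vecD index_zero_vec)
  have "v $ i = l^c * v $ i" using arg_cong[OF eq, of "\<lambda>w. vec_index w i"] i v by simp
  thus ?thesis using i by simp
qed

lemma prim_facts: assumes c: "c > 0" and z: "primitive_root c z"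
  shows "z^c = 1" "inj_on (\<lambda>i. z^i) {..<c}" "z \<noteq> 0"
proof -
  show zc: "z^c = 1" using z primitive_root_def by auto
  show z0: "z \<noteq> 0" using zc c by (metis power_0_left zero_neq_one neq0_conv)
  show "inj_on (\<lambda>i. z^i) {..<c}"
  proof (rule inj_onI)
    fix i j assume i: "i \<in> {..<c}" and j: "j \<in> {..<c}" and eq: "z^i = z^j"
    show "i = j"
    proof (rule ccontr)
      assume ne: "i \<noteq> j"
      have *: "z^(b-a) = 1" if ab: "a < b" "b < c" "z^a = z^b" for a b
      proof -
        have "z^b = z^(a + (b-a))" using ab by simp
        also have "\<dots> = z^a * z^(b-a)" by (rule power_add)
        finally have "z^b = z^a * z^(b-a)" .
        thus ?thesis using ab z0 by simp
      qed
      show False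
      proof (cases "i < j")
        case True
        hence "z^(j-i) = 1" using * j eq by simp
        moreover have "j - i \<in> {1..<c}" using True j by auto
        ultimately show False using z primitive_root_def by auto
      next
        case False
        hence ji: "j < i" using ne by simp
        hence "z^(i-j) = 1" using * i eq by simp
        moreover have "i - j \<in> {1..<c}" using ji i by auto
        ultimately show False using z primitive_root_def by auto
      qed
    qed
  qed
qed

lemma pow_pred_inv: assumes "(u::complex)^c = 1" "c > 0" shows "u^(c-1) = inverse u"
proof -
  have u0: "u \<noteq> 0" using assms by (metis power_0_left zero_neq_one neq0_conv)
  have "u^c = u^(Suc (c-1))" using assms(2) by simp
  hence "u * u^(c-1) = 1" using assms(1) by (simp only: power_Suc)
  thus ?thesis using u0 by (simp add: field_simps)
qed

lemma theta_alg: assumes c: "c > 0" and u: "(u::complex)^c = 1" and v: "v^c = 1"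
  shows "\<exists>P. lead_coeff P = 1 \<and> poly (map_poly of_int P) (u + inverse u + v + inverse v) = 0"
proof -
  define a :: "nat \<Rightarrow> nat" where "a = (\<lambda>s. [1, c-1, 0, 0] ! s)"
  define b :: "nat \<Rightarrow> nat" where "b = (\<lambda>s. [0, 0, 1, c-1] ! s)"
  have "(\<Sum>s<4. u^(a s) * v^(b s)) = u + u^(c-1) + v + v^(c-1)"
    unfolding a_def b_def by (simp add: eval_nat_numeral lessThan_Suc)
  also have "\<dots> = u + inverse u + v + inverse v" using pow_pred_inv[OF u c] pow_pred_inv[OF v c] by simp
  finally show ?thesis using shift_alg_int[OF c u v, where N=4 and a=a and b=b] by simp
qed

lemma delta_alg: assumes c: "c > 0" and u: "(u::complex)^c = 1" and v: "v^c = 1"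
  shows "\<exists>P. lead_coeff P = 1 \<and> poly (map_poly of_int P)
     (u*v + u * inverse v + inverse u * v + inverse u * inverse v + 2) = 0"
proof -
  define a :: "nat \<Rightarrow> nat" where "a = (\<lambda>s. [1, 1, c-1, c-1, 0, 0] ! s)"
  define b :: "nat \<Rightarrow> nat" where "b = (\<lambda>s. [1, c-1, 1, c-1, 0, 0] ! s)"
  have "(\<Sum>s<6. u^(a s) * v^(b s)) = u*v + u * v^(c-1) + u^(c-1) * v + u^(c-1) * v^(c-1) + 2"
    unfolding a_def b_def by (simp add: eval_nat_numeral lessThan_Suc)
  also have "\<dots> = u*v + u * inverse v + inverse u * v + inverse u * inverse v + 2"
    using pow_pred_inv[OF u c] pow_pred_inv[OF v c] by simp
  finally show ?thesis using shift_alg_int[OF c u v, where N=6 and a=a and b=b] by simp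
qed

lemma root_of_dvd: assumes "p dvd q" "poly (map_poly (of_int :: int \<Rightarrow> 'k::comm_ring_1) p) x = 0"
  shows "poly (map_poly of_int q) x = 0"
proof -
  obtain r where "q = p * r" using assms(1) by blast
  thus ?thesis using assms(2) by (simp add: of_int_poly_hom.hom_mult)
qed

definition LT :: "int poly poly" where
  "LT = [:[:0,1:]:]^2 * [:0,1:] + [:0,1:] + [:[:0,1:]:] * [:0,1:]^2 + [:[:0,1:]:]"
definition LD :: "int poly poly" where
  "LD = ([:[:0,1:]:]^2 + 1) * ([:0,1:]^2 + 1) + [:[:0,1:]:] * [:0,1:] + [:[:0,1:]:] * [:0,1:]"

lemma ev_LT: assumes "(y::'k::field) \<noteq> 0" "w \<noteq> 0"
  shows "ev2 y w LT / (y*w) = y + inverse y + w + inverse w"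
  using assms unfolding LT_def
  by (simp only: ev2_add ev2_mult ev2_power ev2_one ev2_Y ev2_W) (simp add: field_simps power2_eq_square)

lemma ev_LD: assumes "(y::'k::field) \<noteq> 0" "w \<noteq> 0"
  shows "ev2 y w LD / (y*w) = y*w + y * inverse w + inverse y * w + inverse y * inverse w + 2"
  using assms unfolding LD_def
  by (simp only: ev2_add ev2_mult ev2_power ev2_one ev2_Y ev2_W) (simp add: field_simps power2_eq_square)

theorem mainTheorem13:
  fixes c :: nat and z :: complex and g :: "'a :: field mat"
  assumes "c > 0" and "primitive_root c z"
    and "g \<in> Sp4" and "g ^\<^sub>m c = 1\<^sub>m 4"
  shows "poly (map_poly of_int (Theta c z)) (chi 3 g) = 0
       \<and> poly (map_poly of_int (Delta c z)) (chi 2 g) = 0"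
proof -
  note c = assms(1)
  have zc: "z^c = 1" and zd: "inj_on (\<lambda>i. z^i) {..<c}" and z0: "z \<noteq> 0"
    using prim_facts[OF c assms(2)] by auto
  have g: "g \<in> carrier_mat 4 4" using assms(3) Sp4_def by auto
  define gK where "gK = map_mat to_ac g"
  have gK: "gK \<in> carrier_mat 4 4" using g gK_def by simp
  have SK: "Msym (\<lambda>i j. gK $$ (i,j)) k l = Jv k l" if "k < 4" "l < 4" for k l
  proof -
    have "Msym (\<lambda>i j. gK $$ (i,j)) k l = to_ac (Msym (\<lambda>i j. g $$ (i,j)) k l)"
      unfolding gK_def Msym_def using g that by simp
    also have "\<dots> = to_ac (Jv k l)" using Sp4_Msym[OF assms(3) that] by simp
    also have "\<dots> = Jv k l" unfolding Jv_def by simp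
    finally show ?thesis .
  qed
  define pK where "pK = char_poly gK"
  have pK: "pK = map_poly to_ac (char_poly g)" unfolding pK_def gK_def by (rule to_ac_hom.char_poly_hom[OF g])
  have pal: "poly pK T = T^4 * poly pK (1/T)" if "T \<noteq> 0" for T
    unfolding pK_def charpoly_D4[OF gK] by (rule symp_palin[OF SK that])
  have dK: "degree pK = 4" and lK: "coeff pK 4 = 1" using degree_monic_char_poly[OF gK] pK_def by auto
  have cK: "coeff pK 0 = 1 \<and> coeff pK 1 = coeff pK 3" by (rule palin_coeffs[OF dK lK pal])
  obtain l m where lm: "l \<noteq> 0" "m \<noteq> 0" "poly pK l = 0" "poly pK m = 0"
    "- coeff pK 3 = l + 1/l + m + 1/m" "coeff pK 2 = 2 + (l + 1/l) * (m + 1/m)"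
    using roots_exist[OF dK lK] cK by blast
  have gKc: "gK ^\<^sub>m c = 1\<^sub>m 4"
  proof -
    have "map_mat to_ac (g ^\<^sub>m c) = (map_mat to_ac g) ^\<^sub>m c" by (rule to_ac_hom.mat_hom_pow[OF g])
    moreover have "map_mat to_ac (1\<^sub>m 4 :: 'a mat) = (1\<^sub>m 4 :: 'a alg_closure mat)" by (rule to_ac_hom.mat_hom_one)
    ultimately show ?thesis unfolding gK_def using assms(4) by metis
  qed
  have lc: "l^c = 1" using eig_root_unity[OF gK gKc] lm(3) pK_def by simp
  have mc: "m^c = 1" using eig_root_unity[OF gK gKc] lm(4) pK_def by simp
  have chi3: "to_ac (chi 3 g) = l + inverse l + m + inverse m"
    using lm(5) unfolding chi_def pK by (simp add: divide_inverse)
  have chi2: "to_ac (chi 2 g) = l*m + l * inverse m + inverse l * m + inverse l * inverse m + 2"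
    using lm(6) unfolding chi_def pK by (simp add: divide_inverse algebra_simps)
  have hT: "poly (map_poly of_int (Theta c z)) (ev2 (z^i) (z^j) LT / (z^i * z^j)) = 0"
    if i: "i < c" and j: "j < c" for i j
  proof -
    define x where "x = z^i + inverse (z^i) + z^j + inverse (z^j)"
    have ev: "ev2 (z^i) (z^j) LT / (z^i * z^j) = x" unfolding x_def by (rule ev_LT) (use z0 in auto)
    have zi: "(z^i)^c = 1" "(z^j)^c = 1" using zc by (simp_all add: power_mult[symmetric] mult.commute power_mult)
    obtain P where P: "lead_coeff P = 1" "poly (map_poly of_int P) x = 0"
      using theta_alg[OF c zi] unfolding x_def by blast
    have mx: "poly (map_poly of_int (min_int_poly x)) x = 0" using min_int_poly_props[OF P] by simp
    have "min_int_poly x dvd Theta c z" unfolding Theta_def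
      by (rule dvd_Lcm) (use i j in \<open>force simp: x_def\<close>)
    thus ?thesis using root_of_dvd mx ev by simp
  qed
  have "poly (map_poly of_int (Theta c z)) (ev2 l m LT / (l * m)) = 0"
    by (rule transfer2[OF c zc zd hT lc mc])
  hence "poly (map_poly of_int (Theta c z)) (to_ac (chi 3 g)) = 0"
    using ev_LT[OF lm(1,2)] chi3 by simp
  hence T: "poly (map_poly of_int (Theta c z)) (chi 3 g) = 0"
    by (simp add: to_ac_poly_of_int[symmetric])
  have hD: "poly (map_poly of_int (Delta c z)) (ev2 (z^i) (z^j) LD / (z^i * z^j)) = 0"
    if i: "i < c" and j: "j < c" for i j
  proof -
    define x where "x = z^i * z^j + z^i * inverse (z^j) + inverse (z^i) * z^j + inverse (z^i) * inverse (z^j) + 2"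
    have ev: "ev2 (z^i) (z^j) LD / (z^i * z^j) = x" unfolding x_def by (rule ev_LD) (use z0 in auto)
    have zi: "(z^i)^c = 1" "(z^j)^c = 1" using zc by (simp_all add: power_mult[symmetric] mult.commute power_mult)
    obtain P where P: "lead_coeff P = 1" "poly (map_poly of_int P) x = 0"
      using delta_alg[OF c zi] unfolding x_def by blast
    have mx: "poly (map_poly of_int (min_int_poly x)) x = 0" using min_int_poly_props[OF P] by simp
    have x': "x = z^(i+j) + z^i * inverse (z^j) + inverse (z^i) * z^j + inverse (z^(i+j)) + 2"
      unfolding x_def by (simp add: power_add)
    have "min_int_poly x dvd Delta c z" unfolding Delta_def
      by (rule dvd_Lcm) (use i j in \<open>force simp: x'\<close>)
    thus ?thesis using root_of_dvd mx ev by simp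
  qed
  have "poly (map_poly of_int (Delta c z)) (ev2 l m LD / (l * m)) = 0"
    by (rule transfer2[OF c zc zd hD lc mc])
  hence "poly (map_poly of_int (Delta c z)) (to_ac (chi 2 g)) = 0"
    using ev_LD[OF lm(1,2)] chi2 by simp
  hence D: "poly (map_poly of_int (Delta c z)) (chi 2 g) = 0"
    by (simp add: to_ac_poly_of_int[symmetric])
  show ?thesis using T D by simp
qed

end
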